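(* Let $(X,T)$ be a topological dynamical system. If $(X,T)$ is multi-sensitive then it is thickly sensitive. If moreover $(X,T)$ is topologically transitive, then $(X,T)$ is thickly sensitive if and only if it is multi-sensitive.
   Context: A topological dynamical system $(X,T)$: $(X,\varrho)$ compact metric, $T:X\to X$ continuous surjection. For opene (open nonempty) $U\subset X$ and $\delta>0$, $S_T(U,\delta)=\{n\in\mathbb{N}:\exists x_1,x_2\in U,\ \varrho(T^nx_1,T^nx_2)>\delta\}$. A set $\mathcal S\subset\mathbb N$ is thick if for each $k$ there is $n_k$ with $\{n_k,\dots,n_k+k\}\subset\mathcal S$. $(X,T)$ is thickly sensitive if there is $\delta>0$ with $S_T(U,\delta)$ thick for every opene $U$; multi-sensitive if there is $\delta>0$ such that $\bigcap_{i=1}^k S_T(U_i,\delta)\neq\varnothing$ for every finite collection $U_1,\dots,U_k$ of opene subsets. $(X,T)$ is transitive if for all opene $U_1,U_2$ there is $n\in\mathbb N$ with $U_1\cap T^{-n}U_2\ne\varnothing$. *)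

theory Defs
  imports "HOL-Analysis.Analysis"
begin

text \<open>A topological dynamical system: X compact metric (as a subset of a metric space),
  T continuous surjection X onto X. Natural numbers are the positive integers.\<close>

definition tds :: "'a::metric_space set \<Rightarrow> ('a \<Rightarrow> 'a) \<Rightarrow> bool" where
  "tds X T \<longleftrightarrow> X \<noteq> {} \<and> compact X \<and> continuous_on X T \<and> T ` X = X"

definition opene :: "'a::metric_space set \<Rightarrow> 'a set \<Rightarrow> bool" where
  "opene X U \<longleftrightarrow> openin (top_of_set X) U \<and> U \<noteq> {}"

definition sens_set :: "'a::metric_space set \<Rightarrow> ('a \<Rightarrow> 'a) \<Rightarrow> 'a set \<Rightarrow> real \<Rightarrow> nat set" where
  "sens_set X T U \<delta> = {n. n \<ge> 1 \<and> (\<exists>x1\<in>U. \<exists>x2\<in>U. dist ((T ^^ n) x1) ((T ^^ n) x2) > \<delta>)}"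

definition thick :: "nat set \<Rightarrow> bool" where
  "thick S \<longleftrightarrow> (\<forall>k. \<exists>n. {n..n+k} \<subseteq> S)"

definition thickly_sensitive :: "'a::metric_space set \<Rightarrow> ('a \<Rightarrow> 'a) \<Rightarrow> bool" where
  "thickly_sensitive X T \<longleftrightarrow>
     (\<exists>\<delta>>0. \<forall>U. opene X U \<longrightarrow> thick (sens_set X T U \<delta>))"

definition multi_sensitive :: "'a::metric_space set \<Rightarrow> ('a \<Rightarrow> 'a) \<Rightarrow> bool" where
  "multi_sensitive X T \<longleftrightarrow>
     (\<exists>\<delta>>0. \<forall>k::nat. \<forall>U::nat \<Rightarrow> 'a set. (\<forall>i\<in>{1..k}. opene X (U i)) \<longrightarrow>
        (\<Inter>i\<in>{1..k}. sens_set X T (U i) \<delta>) \<noteq> {})"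

definition transitive :: "'a::metric_space set \<Rightarrow> ('a \<Rightarrow> 'a) \<Rightarrow> bool" where
  "transitive X T \<longleftrightarrow>
     (\<forall>U1 U2. opene X U1 \<and> opene X U2 \<longrightarrow>
        (\<exists>n\<ge>1. U1 \<inter> {x\<in>X. (T ^^ n) x \<in> U2} \<noteq> {}))"

end

theory Submission
  imports Defs
begin

lemma iter_image:
  assumes "tds X T" shows "(T ^^ j) ` X = X"
proof (induction j)
  case 0 then show ?case by simp
next
  case (Suc j)
  have "(T ^^ Suc j) ` X = T ` ((T ^^ j) ` X)" by (simp add: image_comp)
  then show ?case using Suc assms unfolding tds_def by simp
qed

lemma iter_cont:
  assumes "tds X T" shows "continuous_on X (T ^^ j)"
proof (induction j)
  case 0 then show ?case by (simp add: continuous_on_id)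
next
  case (Suc j)
  have "continuous_on X (T \<circ> (T ^^ j))"
    apply (rule continuous_on_compose[OF Suc])
    using assms iter_image[OF assms, of j] unfolding tds_def by simp
  then show ?case by simp
qed

lemma preimage_opene:
  assumes "tds X T" "opene X U"
  shows "opene X {x\<in>X. (T ^^ j) x \<in> U}"
proof -
  have eq: "{x\<in>X. (T ^^ j) x \<in> U} = X \<inter> (T ^^ j) -` U" by auto
  have "openin (top_of_set X) (X \<inter> (T ^^ j) -` U)"
    apply (rule continuous_openin_preimage[OF iter_cont[OF assms(1)], where T=X])
    using iter_image[OF assms(1), of j] assms(2) unfolding opene_def by auto
  moreover have "{x\<in>X. (T ^^ j) x \<in> U} \<noteq> {}"
  proof -
    obtain u where "u \<in> U" using assms(2) unfolding opene_def by auto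
    moreover have "U \<subseteq> X" using assms(2) unfolding opene_def by (meson openin_imp_subset)
    ultimately have "u \<in> (T ^^ j) ` X" using iter_image[OF assms(1), of j] by auto
    then show ?thesis using \<open>u \<in> U\<close> by auto
  qed
  ultimately show ?thesis unfolding opene_def eq by simp
qed

lemma small_nbhd:
  assumes "tds X T" "x0 \<in> X" "\<epsilon> > 0"
  shows "\<exists>e>0. \<forall>x\<in>X. dist x x0 < e \<longrightarrow> (\<forall>m\<le>k. dist ((T^^m) x) ((T^^m) x0) < \<epsilon>)"
proof (induction k)
  case 0 then show ?case using assms by (intro exI[of _ \<epsilon>]) auto
next
  case (Suc k)
  then obtain e where e: "e > 0" "\<forall>x\<in>X. dist x x0 < e \<longrightarrow> (\<forall>m\<le>k. dist ((T^^m) x) ((T^^m) x0) < \<epsilon>)" by auto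
  obtain d where d: "d > 0" "\<forall>x\<in>X. dist x x0 < d \<longrightarrow> dist ((T^^Suc k) x) ((T^^Suc k) x0) < \<epsilon>"
    using iter_cont[OF assms(1), of "Suc k"] assms(2,3) unfolding continuous_on_iff by blast
  show ?case
    apply (rule exI[of _ "min e d"])
    using e d by (auto simp: le_Suc_eq)
qed

lemma part1:
  assumes "tds X T" "multi_sensitive X T"
  shows "thickly_sensitive X T"
proof -
  obtain \<delta> where \<delta>: "\<delta> > 0" and M0: "\<forall>k::nat. \<forall>U::nat \<Rightarrow> 'a set. (\<forall>i\<in>{1..k}. opene X (U i)) \<longrightarrow>
        (\<Inter>i\<in>{1..k}. sens_set X T (U i) \<delta>) \<noteq> {}"
    using assms(2) unfolding multi_sensitive_def by blast
  note M = M0[rule_format]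
  have "thick (sens_set X T U \<delta>)" if U: "opene X U" for U
    unfolding thick_def
  proof
    fix k
    obtain x0 where x0: "x0 \<in> U" using U unfolding opene_def by auto
    have UX: "U \<subseteq> X" using U unfolding opene_def by (meson openin_imp_subset)
    obtain e where e: "e > 0" "\<forall>x'\<in>X. dist x' x0 < e \<longrightarrow> x' \<in> U"
      using U x0 unfolding opene_def openin_euclidean_subtopology_iff by blast
    obtain e' where e': "e' > 0" "\<forall>x\<in>X. dist x x0 < e' \<longrightarrow> (\<forall>m\<le>k. dist ((T^^m) x) ((T^^m) x0) < \<delta>/2)"
      using small_nbhd[OF assms(1), of x0 "\<delta>/2" k] x0 UX \<delta> by auto
    define U' where "U' = {x\<in>X. dist x x0 < min e e'}"
    have U'eq: "U' = X \<inter> ball x0 (min e e')" unfolding U'_def by (auto simp: dist_commute)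
    have "opene X U'" unfolding opene_def U'eq
      using x0 UX e e' by (auto intro: openin_open_Int)
    have U'U: "U' \<subseteq> U" unfolding U'_def using e by auto
    define W where "W i = {x\<in>X. (T ^^ (i-1)) x \<in> U'}" for i
    have "\<forall>i\<in>{1..k+1}. opene X (W i)" unfolding W_def
      using preimage_opene[OF assms(1) \<open>opene X U'\<close>] by blast
    then obtain n where n: "\<And>i. i \<in> {1..k+1} \<Longrightarrow> n \<in> sens_set X T (W i) \<delta>"
      using M[of "k+1" W] by blast
    have W1: "W 1 = U'" unfolding W_def U'_def by auto
    have "n > k"
    proof (rule ccontr)
      assume "\<not> n > k"
      from n[of 1] W1 obtain x1 x2 where "x1 \<in> U'" "x2 \<in> U'" "dist ((T^^n) x1) ((T^^n) x2) > \<delta>"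
        unfolding sens_set_def by auto
      moreover have "dist ((T^^n) x1) ((T^^n) x0) < \<delta>/2" "dist ((T^^n) x2) ((T^^n) x0) < \<delta>/2"
        using e'(2) \<open>x1 \<in> U'\<close> \<open>x2 \<in> U'\<close> \<open>\<not> n > k\<close> unfolding U'_def by auto
      ultimately show False
        using dist_triangle2[of "(T^^n) x1" "(T^^n) x2" "(T^^n) x0"] by linarith
    qed
    have "{n-k..n-k+k} \<subseteq> sens_set X T U \<delta>"
    proof
      fix m assume m: "m \<in> {n-k..n-k+k}"
      define j where "j = n - m"
      have jk: "j \<le> k" "m = n - j" "j < n" using m \<open>n > k\<close> unfolding j_def by auto
      have "n \<in> sens_set X T (W (j+1)) \<delta>" using n[of "j+1"] jk by auto
      then obtain y1 y2 where y: "y1 \<in> W (j+1)" "y2 \<in> W (j+1)" "dist ((T^^n) y1) ((T^^n) y2) > \<delta>"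
        unfolding sens_set_def by auto
      have fp: "(T^^n) y = (T^^m) ((T^^j) y)" for y
        using jk funpow_add[of m j T] by (simp add: add.commute)
      have a: "(T^^j) y1 \<in> U" "(T^^j) y2 \<in> U" "m \<ge> 1"
        "dist ((T^^m) ((T^^j) y1)) ((T^^m) ((T^^j) y2)) > \<delta>"
        using y U'U jk fp unfolding W_def by auto
      then show "m \<in> sens_set X T U \<delta>" unfolding sens_set_def by blast
    qed
    then show "\<exists>n. {n..n + k} \<subseteq> sens_set X T U \<delta>" by blast
  qed
  then show ?thesis unfolding thickly_sensitive_def using \<delta> by blast
qed

lemma chain:
  fixes k :: nat and U :: "nat \<Rightarrow> 'a::metric_space set"
  assumes "tds X T" "transitive X T"
  shows "(\<forall>i\<in>{1..k}. opene X (U i)) \<Longrightarrow>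
     \<exists>V N. opene X V \<and> (\<forall>i\<in>{1..k}. \<exists>j\<le>N. V \<subseteq> {x\<in>X. (T^^j) x \<in> U i})"
proof (induction k)
  case 0
  have "opene X X" using assms(1) unfolding opene_def tds_def by auto
  then show ?case by auto
next
  case (Suc k)
  then obtain V N where V: "opene X V" "\<forall>i\<in>{1..k}. \<exists>j\<le>N. V \<subseteq> {x\<in>X. (T^^j) x \<in> U i}"
    by auto
  have "opene X (U (Suc k))" using Suc.prems by auto
  then obtain n where n: "n \<ge> 1" "V \<inter> {x\<in>X. (T ^^ n) x \<in> U (Suc k)} \<noteq> {}"
    using assms(2) V(1) unfolding transitive_def by blast
  define V' where "V' = V \<inter> {x\<in>X. (T ^^ n) x \<in> U (Suc k)}"
  have "opene X V'" unfolding V'_def opene_def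
    using n V(1) preimage_opene[OF assms(1) \<open>opene X (U (Suc k))\<close>, of n]
    unfolding opene_def by (auto intro: openin_Int)
  moreover have "\<forall>i\<in>{1..Suc k}. \<exists>j\<le>max N n. V' \<subseteq> {x\<in>X. (T^^j) x \<in> U i}"
  proof
    fix i assume i: "i \<in> {1..Suc k}"
    show "\<exists>j\<le>max N n. V' \<subseteq> {x\<in>X. (T^^j) x \<in> U i}"
    proof (cases "i = Suc k")
      case True then show ?thesis unfolding V'_def by (intro exI[of _ n]) auto
    next
      case False
      then have "i \<in> {1..k}" using i by auto
      then obtain j where "j \<le> N" "V \<subseteq> {x\<in>X. (T^^j) x \<in> U i}" using V(2) by blast
      then show ?thesis unfolding V'_def by (intro exI[of _ j]) auto
    qed
  qed
  ultimately show ?case by blast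
qed

lemma part2:
  assumes "tds X T" "transitive X T" "thickly_sensitive X T"
  shows "multi_sensitive X T"
proof -
  obtain \<delta> where \<delta>: "\<delta> > 0" and TS: "\<And>U. opene X U \<Longrightarrow> thick (sens_set X T U \<delta>)"
    using assms(3) unfolding thickly_sensitive_def by blast
  have "(\<Inter>i\<in>{1..k}. sens_set X T (U i) \<delta>) \<noteq> {}" if U: "\<forall>i\<in>{1..k}. opene X (U i)" for k :: nat and U :: "nat \<Rightarrow> 'a set"
  proof -
    obtain V N where V: "opene X V" "\<forall>i\<in>{1..k}. \<exists>j\<le>N. V \<subseteq> {x\<in>X. (T^^j) x \<in> U i}"
      using chain[OF assms(1,2) U] by blast
    obtain m where m: "{m..m+N} \<subseteq> sens_set X T V \<delta>" using TS[OF V(1)] unfolding thick_def by blast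
    have "m \<in> sens_set X T V \<delta>" using m by auto
    then have m1: "m \<ge> 1" unfolding sens_set_def by auto
    have "m \<in> sens_set X T (U i) \<delta>" if i: "i \<in> {1..k}" for i
    proof -
      obtain j where j: "j \<le> N" "V \<subseteq> {x\<in>X. (T^^j) x \<in> U i}" using V(2) i by blast
      have "m + j \<in> sens_set X T V \<delta>" using m j by auto
      then obtain x1 x2 where x: "x1 \<in> V" "x2 \<in> V" "dist ((T^^(m+j)) x1) ((T^^(m+j)) x2) > \<delta>"
        unfolding sens_set_def by auto
      have fp: "(T^^(m+j)) y = (T^^m) ((T^^j) y)" for y
        using funpow_add[of m j T] by simp
      have a: "(T^^j) x1 \<in> U i" "(T^^j) x2 \<in> U i"
        "dist ((T^^m) ((T^^j) x1)) ((T^^m) ((T^^j) x2)) > \<delta>"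
        using x j fp by auto
      then show ?thesis unfolding sens_set_def using m1 by blast
    qed
    then show ?thesis by blast
  qed
  then show ?thesis unfolding multi_sensitive_def using \<delta> by blast
qed

theorem proposition3p2:
  fixes X :: "'a::metric_space set" and T :: "'a \<Rightarrow> 'a"
  assumes "tds X T"
  shows "(multi_sensitive X T \<longrightarrow> thickly_sensitive X T)
    \<and> (transitive X T \<longrightarrow> (thickly_sensitive X T \<longleftrightarrow> multi_sensitive X T))"
  using part1[OF assms] part2[OF assms] by blast

end
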